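(* Let $\mu$ be a $(C,\gamma)$-absolutely decaying measure on $\mathbb{R}$, let $K=\operatorname{supp}\mu$, and let $0<\alpha\le\frac14\left(\frac{1}{3C}\right)^{1/\gamma}$. Then for every bi-Lipschitz map $\varphi:\mathbb{R}\to\mathbb{R}$, the set $\varphi(\mathbf{BA})$ is $\alpha$-winning on $K$.
   Context: $\mathbf{BA}=\{x\in\mathbb{R}:\exists c=c(x)>0 \text{ with } |x-p/q|>c/q^2\ \forall (p,q)\in\mathbb{Z}\times\mathbb{N}\}$ is the set of badly approximable numbers. $B(x,\rho)$ denotes the closed ball. A locally finite Borel measure $\mu$ on $\mathbb{R}$ is $(C,\gamma)$-absolutely decaying if there is $\rho_0>0$ such that for all $0<\rho\le\rho_0$, $x\in\operatorname{supp}\mu$, $y\in\mathbb{R}$, $\varepsilon>0$: $\mu(B(x,\rho)\cap B(y,\varepsilon\rho))<C\varepsilon^\gamma\mu(B(x,\rho))$. A map $\varphi$ is bi-Lipschitz if there is $L\ge1$ with $L^{-1}\le|\varphi(x)-\varphi(y)|/|x-y|\le L$ for all $x\ne y$. Schmidt's game on a complete metric space $(X,d)$ with parameters $0<\alpha,\beta<1$ and target $S\subset X$: on $X\times\mathbb{R}_+$ write $(x_2,\rho_2)\le_s(x_1,\rho_1)$ if $\rho_2+d(x_1,x_2)\le\rho_1$. Bob picks $\omega_1=(x_1,\rho_1)$; then Alice and Bob alternately pick $\omega_k'=(x_k',\rho_k')\le_s\omega_k$ with $\rho_k'=\alpha\rho_k$ and $\omega_{k+1}\le_s\omega_k'$ with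 $\rho_{k+1}=\beta\rho_k'$. The nested closed balls intersect in a point $x_\infty$; Alice wins if $x_\infty\in S$. $S$ is $\alpha$-winning if for every $\beta\in(0,1)$ Alice has a strategy winning against all plays of Bob. For closed $K\subset\mathbb{R}$, $S\subset\mathbb{R}$ is $\alpha$-winning on $K$ if $S\cap K$ is $\alpha$-winning for the game played on $K$ with the induced metric. *)

theory Defs
  imports "HOL-Analysis.Analysis"
begin

definition BA :: "real set" where
  "BA = {x. \<exists>c>0. \<forall>(p::int) (q::nat). q > 0 \<longrightarrow> \<bar>x - real_of_int p / real q\<bar> > c / (real q)^2}"

definition locally_finite_borel :: "real measure \<Rightarrow> bool" where
  "locally_finite_borel M \<longleftrightarrow> sets M = sets borel \<and>
     (\<forall>x. \<exists>e>0. emeasure M (ball x e) < \<infinity>)"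

definition msupp :: "real measure \<Rightarrow> real set" where
  "msupp M = {x. \<forall>e>0. emeasure M (ball x e) > 0}"

definition abs_decaying :: "real measure \<Rightarrow> real \<Rightarrow> real \<Rightarrow> bool" where
  "abs_decaying M C \<gamma> \<longleftrightarrow> (\<exists>\<rho>0>0. \<forall>\<rho> x y \<epsilon>. 0 < \<rho> \<and> \<rho> \<le> \<rho>0 \<and> x \<in> msupp M \<and> \<epsilon> > 0 \<longrightarrow>
      emeasure M (cball x \<rho> \<inter> cball y (\<epsilon> * \<rho>)) < ennreal (C * \<epsilon> powr \<gamma>) * emeasure M (cball x \<rho>))"

definition bi_lipschitz :: "(real \<Rightarrow> real) \<Rightarrow> bool" where
  "bi_lipschitz \<phi> \<longleftrightarrow> (\<exists>L\<ge>1. \<forall>x y. x \<noteq> y \<longrightarrow>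
      1 / L \<le> \<bar>\<phi> x - \<phi> y\<bar> / \<bar>x - y\<bar> \<and> \<bar>\<phi> x - \<phi> y\<bar> / \<bar>x - y\<bar> \<le> L)"

text \<open>Schmidt's game on a closed set K (induced metric). A pair (x, r) stands for the closed
  ball of K with centre x and radius r.  (x2,r2) \<le>s (x1,r1) iff r2 + d(x1,x2) \<le> r1.\<close>
definition s_le :: "real \<times> real \<Rightarrow> real \<times> real \<Rightarrow> bool" where
  "s_le w2 w1 \<longleftrightarrow> snd w2 + dist (fst w1) (fst w2) \<le> snd w1"

definition legal_move :: "real set \<Rightarrow> real \<Rightarrow> real \<times> real \<Rightarrow> real \<times> real \<Rightarrow> bool" where
  "legal_move K c w w' \<longleftrightarrow> fst w' \<in> K \<and> snd w' = c * snd w \<and> s_le w' w"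

text \<open>Alice's k-th move answers Bob's moves
  b 0, ..., b k.\<close>
definition alpha_winning_on :: "real set \<Rightarrow> real \<Rightarrow> real set \<Rightarrow> bool" where
  "alpha_winning_on K \<alpha> S \<longleftrightarrow>
    (\<forall>\<beta>. 0 < \<beta> \<and> \<beta> < 1 \<longrightarrow>
      (\<exists>\<sigma> :: (real \<times> real) list \<Rightarrow> real \<times> real.
        \<forall>b :: nat \<Rightarrow> real \<times> real.
          let a = (\<lambda>k. \<sigma> (map b [0..<Suc k])) in
          let bob_ok = (\<lambda>k. fst (b 0) \<in> K \<and> snd (b 0) > 0 \<and>
                               (\<forall>j<k. legal_move K \<beta> (a j) (b (Suc j)))) in
          (\<forall>k. bob_ok k \<longrightarrow> legal_move K \<alpha> (b k) (a k)) \<and>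
          ((\<forall>k. bob_ok k) \<longrightarrow>
             (\<forall>x\<in>K. (\<forall>k. dist (fst (b k)) x \<le> snd (b k)) \<longrightarrow> x \<in> S))))"

end

theory Submission
  imports Defs
begin

lemma supp_exists:
  assumes sM: "sets M = sets borel" and A: "A \<in> sets borel" and pos: "emeasure M A > 0"
  shows "\<exists>x\<in>A. x \<in> msupp M"
proof (rule ccontr)
  assume nx: "\<not> ?thesis"
  define I where "I = {(q,r). q \<in> \<rat> \<and> r \<in> \<rat> \<and> emeasure M (ball q r) = 0}"
  have cI: "countable I"
  proof -
    have "I \<subseteq> \<rat> \<times> \<rat>" unfolding I_def by auto
    moreover have "countable (\<rat> \<times> (\<rat>::real set))" by (intro countable_SIGMA countable_rat)
    ultimately show ?thesis using countable_subset by blast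
  qed
  have N: "(\<Union>i\<in>I. ball (fst i) (snd i)) \<in> null_sets M"
  proof (rule null_sets_UN'[OF cI])
    fix i assume "i \<in> I"
    then show "ball (fst i) (snd i) \<in> null_sets M"
      unfolding I_def using sM by (auto simp: null_sets_def)
  qed
  have sub: "A \<subseteq> (\<Union>i\<in>I. ball (fst i) (snd i))"
  proof
    fix a assume aA: "a \<in> A"
    then have "a \<notin> msupp M" using nx by blast
    then obtain e where e: "e > 0" "\<not> emeasure M (ball a e) > 0" unfolding msupp_def by auto
    then have e0: "emeasure M (ball a e) = 0" by (simp add: not_gr_zero)
    obtain q where q: "q \<in> \<rat>" "a - e/3 < q" "q < a + e/3"
      using Rats_dense_in_real[of "a - e/3" "a + e/3"] e by auto
    obtain r where r: "r \<in> \<rat>" "e/3 < r" "r < 2*e/3"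
      using Rats_dense_in_real[of "e/3" "2*e/3"] e by auto
    have sub: "ball q r \<subseteq> ball a e"
      using q r by (auto simp: dist_real_def)
    have "emeasure M (ball q r) \<le> emeasure M (ball a e)"
      by (rule emeasure_mono[OF sub]) (use sM in simp)
    then have "emeasure M (ball q r) = 0" using e0 by simp
    then have "(q,r) \<in> I" unfolding I_def using q r by auto
    moreover have "a \<in> ball q r" using q r by (auto simp: dist_real_def)
    ultimately show "a \<in> (\<Union>i\<in>I. ball (fst i) (snd i))" by force
  qed
  have "A \<in> null_sets M" by (rule null_sets_subset[OF N _ sub]) (use A sM in auto)
  then show False using pos by auto
qed

lemma surj_bilip:
  fixes \<phi> :: "real \<Rightarrow> real"
  assumes L: "L \<ge> 1" and bl: "\<forall>x y. x \<noteq> y \<longrightarrow>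
      1 / L \<le> \<bar>\<phi> x - \<phi> y\<bar> / \<bar>x - y\<bar> \<and> \<bar>\<phi> x - \<phi> y\<bar> / \<bar>x - y\<bar> \<le> L"
  shows "\<exists>t. \<phi> t = v"
proof -
  have lo: "\<bar>x - y\<bar> \<le> L * \<bar>\<phi> x - \<phi> y\<bar>" for x y
  proof (cases "x = y")
    case False
    then have "1 / L \<le> \<bar>\<phi> x - \<phi> y\<bar> / \<bar>x - y\<bar>" using bl by auto
    then show ?thesis using False L by (simp add: field_simps)
  qed simp
  have up: "\<bar>\<phi> x - \<phi> y\<bar> \<le> L * \<bar>x - y\<bar>" for x y
  proof (cases "x = y")
    case False
    then have "\<bar>\<phi> x - \<phi> y\<bar> / \<bar>x - y\<bar> \<le> L" using bl by auto
    then show ?thesis using False L by (simp add: field_simps)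
  qed simp
  have inj: "inj \<phi>"
  proof (rule injI)
    fix x y assume "\<phi> x = \<phi> y" then show "x = y" using lo[of x y] by simp
  qed
  have cont: "continuous_on S \<phi>" for S
  proof -
    have "isCont \<phi> x" for x
    proof (rule continuous_at_eps_delta[THEN iffD2], intro allI impI)
      fix e :: real assume "e > 0"
      then show "\<exists>d>0. \<forall>y. dist y x < d \<longrightarrow> dist (\<phi> y) (\<phi> x) < e"
        using L up[of _ x]
        by (intro exI[of _ "e / L"]) (auto simp: dist_real_def field_simps intro: le_less_trans)
    qed
    then show ?thesis by (simp add: continuous_at_imp_continuous_on)
  qed
  define D where "D = \<bar>v - \<phi> 0\<bar>"
  define T where "T = L * (D + 1)"
  have T: "T > 0" unfolding T_def D_def using L by auto
  have fT: "\<bar>\<phi> T - \<phi> 0\<bar> > D" and fmT: "\<bar>\<phi> (-T) - \<phi> 0\<bar> > D"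
  proof -
    have "T \<le> L * \<bar>\<phi> T - \<phi> 0\<bar>" using lo[of T 0] T by simp
    then have "L * (D+1) \<le> L * \<bar>\<phi> T - \<phi> 0\<bar>" unfolding T_def .
    then show "\<bar>\<phi> T - \<phi> 0\<bar> > D" using L by (simp add: mult_le_cancel_left)
    have "T \<le> L * \<bar>\<phi> (-T) - \<phi> 0\<bar>" using lo[of "-T" 0] T by simp
    then have "L * (D+1) \<le> L * \<bar>\<phi> (-T) - \<phi> 0\<bar>" unfolding T_def .
    then show "\<bar>\<phi> (-T) - \<phi> 0\<bar> > D" using L by (simp add: mult_le_cancel_left)
  qed
  have m: "(\<phi> (-T) < \<phi> 0 \<and> \<phi> 0 < \<phi> T) \<or> (\<phi> T < \<phi> 0 \<and> \<phi> 0 < \<phi> (-T))"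
    by (rule continuous_inj_imp_mono[OF _ _ cont]) (use T inj in \<open>auto intro: inj_on_subset\<close>)
  then show ?thesis
  proof
    assume a: "\<phi> (-T) < \<phi> 0 \<and> \<phi> 0 < \<phi> T"
    then have "\<phi> (-T) \<le> v" "v \<le> \<phi> T" using fT fmT unfolding D_def by auto
    then show ?thesis using IVT'[OF _ _ _ cont, of "-T" v T] T by auto
  next
    assume a: "\<phi> T < \<phi> 0 \<and> \<phi> 0 < \<phi> (-T)"
    then have "\<phi> T \<le> v" "v \<le> \<phi> (-T)" using fT fmT unfolding D_def by auto
    then show ?thesis using IVT2'[OF _ _ _ cont, of T v "-T"] T by auto
  qed
qed

lemma C_gt_1:
  assumes dec: "\<forall>\<rho> x y \<epsilon>. 0 < \<rho> \<and> \<rho> \<le> \<rho>0 \<and> x \<in> msupp M \<and> \<epsilon> > 0 \<longrightarrow>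
      emeasure M (cball x \<rho> \<inter> cball y (\<epsilon> * \<rho>)) < ennreal (C * \<epsilon> powr \<gamma>) * emeasure M (cball x \<rho>)"
    and x: "x \<in> msupp M" and r: "0 < r" "r \<le> \<rho>0"
  shows "C > 1"
proof (rule ccontr)
  assume "\<not> C > 1"
  then have C: "ennreal C \<le> 1" by (simp add: ennreal_le_1)
  have "emeasure M (cball x r \<inter> cball x (1 * r)) < ennreal (C * 1 powr \<gamma>) * emeasure M (cball x r)"
    by (rule dec[rule_format]) (use x r in simp)
  moreover have "cball x r \<inter> cball x (1 * r) = cball x r" by simp
  moreover have "C * 1 powr \<gamma> = C" by simp
  ultimately have "emeasure M (cball x r) < ennreal C * emeasure M (cball x r)" by metis
  also have "\<dots> \<le> 1 * emeasure M (cball x r)" by (rule mult_right_mono[OF C]) simp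
  finally show False by simp
qed

lemma avoid:
  assumes sM: "sets M = sets borel"
    and dec: "\<forall>\<rho> x y \<epsilon>. 0 < \<rho> \<and> \<rho> \<le> \<rho>0 \<and> x \<in> msupp M \<and> \<epsilon> > 0 \<longrightarrow>
      emeasure M (cball x \<rho> \<inter> cball y (\<epsilon> * \<rho>)) < ennreal (C * \<epsilon> powr \<gamma>) * emeasure M (cball x \<rho>)"
    and C: "C > 0" and g: "\<gamma> > 0" and a: "0 < \<alpha>" "\<alpha> \<le> (1/4) * (1 / (3 * C)) powr (1 / \<gamma>)"
    and x: "x \<in> msupp M" and r: "0 < r" "r \<le> \<rho>0"
  shows "\<exists>x'\<in>msupp M. dist x x' \<le> (1-\<alpha>)*r \<and> 3*\<alpha>*r < dist x' y"
proof -
  have C1: "C > 1" by (rule C_gt_1[OF dec x r])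
  define e1 where "e1 = (1 / (3 * C)) powr (1 / \<gamma>)"
  have e1le: "e1 \<le> 1" unfolding e1_def using C1 g by (intro powr_le1) auto
  have e1pos: "e1 > 0" unfolding e1_def using C1 by simp
  have a4: "\<alpha> \<le> 1/4" using a e1le unfolding e1_def by simp
  define \<rho> where "\<rho> = (1-\<alpha>)*r"
  define \<epsilon> where "\<epsilon> = 3*\<alpha>/(1-\<alpha>)"
  have ar: "\<alpha> * r > 0" using a r by simp
  have \<rho>: "0 < \<rho>" "\<rho> \<le> \<rho>0" unfolding \<rho>_def using a4 r ar by (auto simp: algebra_simps)
  have \<epsilon>: "\<epsilon> > 0" unfolding \<epsilon>_def using a a4 by auto
  have \<epsilon>4: "\<epsilon> \<le> 4*\<alpha>" unfolding \<epsilon>_def using a a4 by (simp add: field_simps)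
  have \<epsilon>\<rho>: "\<epsilon> * \<rho> = 3*\<alpha>*r" unfolding \<epsilon>_def \<rho>_def using a4 by (simp add: field_simps)
  have "\<epsilon> powr \<gamma> \<le> e1 powr \<gamma>"
    using \<epsilon>4 a(2) \<epsilon> g unfolding e1_def by (intro powr_mono2) auto
  also have "e1 powr \<gamma> = 1 / (3*C)" unfolding e1_def using g C by (simp add: powr_powr)
  finally have "C * \<epsilon> powr \<gamma> \<le> C * (1/(3*C))" using C by (intro mult_left_mono) auto
  then have Ce: "C * \<epsilon> powr \<gamma> \<le> 1" using C by simp
  define A where "A = cball x \<rho>"
  define B where "B = cball y (\<epsilon> * \<rho>)"
  have "emeasure M (A \<inter> B) < ennreal (C * \<epsilon> powr \<gamma>) * emeasure M A"
    unfolding A_def B_def using dec \<rho> x \<epsilon> by blast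
  also have "\<dots> \<le> 1 * emeasure M A" by (rule mult_right_mono) (use Ce in \<open>auto simp: ennreal_le_1\<close>)
  finally have lt: "emeasure M (A \<inter> B) < emeasure M A" by simp
  have pos: "emeasure M (A - B) > 0"
  proof (rule ccontr)
    assume "\<not> ?thesis"
    then have z: "emeasure M (A - B) = 0" by (simp add: not_gr_zero)
    have "emeasure M A = emeasure M ((A \<inter> B) \<union> (A - B))" by (metis Int_Diff_Un)
    also have "\<dots> \<le> emeasure M (A \<inter> B) + emeasure M (A - B)"
      by (rule emeasure_subadditive) (auto simp: sM A_def B_def)
    finally show False using z lt by simp
  qed
  obtain x' where x': "x' \<in> A - B" "x' \<in> msupp M"
    using supp_exists[OF sM _ pos] unfolding A_def B_def by auto
  show ?thesis
    using x' \<epsilon>\<rho> unfolding A_def B_def \<rho>_def by (auto simp: dist_commute)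
qed

lemma uniq:
  fixes \<phi> :: "real \<Rightarrow> real"
  assumes L: "L \<ge> 1" and lo: "\<And>x y. \<bar>x - y\<bar> \<le> L * \<bar>\<phi> x - \<phi> y\<bar>"
    and r: "r > 0"
    and t: "t = real_of_int p / real q" "q > 0" "8 * L * r * (real q)^2 \<le> 1"
    and t': "t' = real_of_int p' / real q'" "q' > 0" "8 * L * r * (real q')^2 \<le> 1"
    and d: "\<bar>\<phi> t - \<phi> t'\<bar> \<le> 4 * r"
  shows "t = t'"
proof (rule ccontr)
  assume ne: "t \<noteq> t'"
  have qq: "real q > 0" "real q' > 0" using t t' by auto
  have "t - t' = real_of_int (p * int q' - p' * int q) / (real q * real q')"
    unfolding t(1) t'(1) using qq by (simp add: field_simps)
  moreover have "p * int q' - p' * int q \<noteq> 0"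
  proof
    assume "p * int q' - p' * int q = 0"
    then have "real_of_int (p * int q') = real_of_int (p' * int q)" by simp
    then have "real_of_int p * real q' = real_of_int p' * real q" by (simp only: of_int_mult of_int_of_nat_eq)
    then have "t = t'" unfolding t(1) t'(1) using qq by (simp add: field_simps)
    then show False using ne by simp
  qed
  ultimately have "\<bar>t - t'\<bar> = real_of_int \<bar>p * int q' - p' * int q\<bar> / (real q * real q')"
    using qq by (simp add: abs_mult)
  moreover have "real_of_int \<bar>p * int q' - p' * int q\<bar> \<ge> 1"
    using \<open>p * int q' - p' * int q \<noteq> 0\<close> by linarith
  ultimately have g1: "\<bar>t - t'\<bar> \<ge> 1 / (real q * real q')"
    using qq by (simp add: divide_right_mono)
  have "(8 * L * r * (real q * real q'))^2 = (8 * L * r * (real q)^2) * (8 * L * r * (real q')^2)"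
    by (simp add: power2_eq_square)
  also have "\<dots> \<le> 1 * 1" using t t' L r qq by (intro mult_mono) auto
  finally have "(8 * L * r * (real q * real q'))^2 \<le> 1^2" by simp
  then have "8 * L * r * (real q * real q') \<le> 1"
    by (rule power2_le_imp_le) simp
  then have "8 * L * r \<le> 1 / (real q * real q')" using qq by (simp add: field_simps)
  also have "\<dots> \<le> \<bar>t - t'\<bar>" by (rule g1)
  also have "\<dots> \<le> L * \<bar>\<phi> t - \<phi> t'\<bar>" by (rule lo)
  also have "\<dots> \<le> L * (4 * r)" using d L by (intro mult_left_mono) auto
  finally show False using L r by simp
qed


lemma bilip_bounds:
  fixes \<phi> :: "real \<Rightarrow> real"
  assumes L: "L \<ge> 1" and bl: "\<forall>x y. x \<noteq> y \<longrightarrow>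
      1 / L \<le> \<bar>\<phi> x - \<phi> y\<bar> / \<bar>x - y\<bar> \<and> \<bar>\<phi> x - \<phi> y\<bar> / \<bar>x - y\<bar> \<le> L"
  shows "\<bar>x - y\<bar> \<le> L * \<bar>\<phi> x - \<phi> y\<bar>" and "\<bar>\<phi> x - \<phi> y\<bar> \<le> L * \<bar>x - y\<bar>"
proof -
  show "\<bar>x - y\<bar> \<le> L * \<bar>\<phi> x - \<phi> y\<bar>"
  proof (cases "x = y")
    case False
    then have "1 / L \<le> \<bar>\<phi> x - \<phi> y\<bar> / \<bar>x - y\<bar>" using bl by auto
    then show ?thesis using False L by (simp add: field_simps)
  qed simp
  show "\<bar>\<phi> x - \<phi> y\<bar> \<le> L * \<bar>x - y\<bar>"
  proof (cases "x = y")
    case False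
    then have "\<bar>\<phi> x - \<phi> y\<bar> / \<bar>x - y\<bar> \<le> L" using bl by auto
    then show ?thesis using False L by (simp add: field_simps)
  qed simp
qed

theorem theorem4p1:
  fixes M :: "real measure" and C \<gamma> \<alpha> :: real and \<phi> :: "real \<Rightarrow> real"
  assumes "locally_finite_borel M"
    and "C > 0" and "\<gamma> > 0"
    and "abs_decaying M C \<gamma>"
    and "0 < \<alpha>" and "\<alpha> \<le> (1/4) * (1 / (3 * C)) powr (1 / \<gamma>)"
    and "bi_lipschitz \<phi>"
  shows "alpha_winning_on (msupp M) \<alpha> (\<phi> ` BA)"
proof -
  note Cpos = assms(2) and gpos = assms(3) and apos = assms(5) and ale = assms(6)
  define K where "K = msupp M"
  have sM: "sets M = sets borel" using assms(1) unfolding locally_finite_borel_def by simp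
  obtain \<rho>0 where \<rho>0: "\<rho>0 > 0" and dec: "\<forall>\<rho> x y \<epsilon>. 0 < \<rho> \<and> \<rho> \<le> \<rho>0 \<and> x \<in> msupp M \<and> \<epsilon> > 0 \<longrightarrow>
      emeasure M (cball x \<rho> \<inter> cball y (\<epsilon> * \<rho>)) < ennreal (C * \<epsilon> powr \<gamma>) * emeasure M (cball x \<rho>)"
    using assms(4) unfolding abs_decaying_def by blast
  obtain L where L: "L \<ge> 1" and bl: "\<forall>x y. x \<noteq> y \<longrightarrow>
      1 / L \<le> \<bar>\<phi> x - \<phi> y\<bar> / \<bar>x - y\<bar> \<and> \<bar>\<phi> x - \<phi> y\<bar> / \<bar>x - y\<bar> \<le> L"
    using assms(7) unfolding bi_lipschitz_def by blast
  note lo = bilip_bounds(1)[OF L bl] and up = bilip_bounds(2)[OF L bl]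
  show ?thesis
  proof (cases "K = {}")
    case True
    then show ?thesis unfolding alpha_winning_on_def K_def Let_def by auto
  next
    case False
    then obtain x0 where x0: "x0 \<in> K" by auto
    have C1: "C > 1" using C_gt_1[OF dec _ \<rho>0] x0 unfolding K_def by auto
    have e1le: "(1 / (3 * C)) powr (1 / \<gamma>) \<le> 1" using C1 gpos by (intro powr_le1) auto
    have a4: "\<alpha> \<le> 1/4" using ale e1le by simp
    define R where "R r = {t. \<exists>p (q::nat). q > 0 \<and> 8*L*r*(real q)^2 \<le> 1 \<and> t = real_of_int p / real q}" for r
    define good where "good x r x' \<longleftrightarrow> x' \<in> K \<and> dist x x' \<le> (1-\<alpha>)*r \<and>
        (\<forall>t\<in>R r. \<phi> t \<in> cball x (2*r) \<longrightarrow> 3*\<alpha>*r < dist x' (\<phi> t))" for x r x'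
    define A where "A w = (if fst w \<in> K \<and> 0 < snd w \<and> snd w \<le> \<rho>0
        then (SOME x'. good (fst w) (snd w) x', \<alpha> * snd w) else (fst w, \<alpha> * snd w))" for w
    have goodex: "\<exists>x'. good x r x'" if x: "x \<in> K" and r: "0 < r" "r \<le> \<rho>0" for x r
    proof (cases "\<exists>t0\<in>R r. \<phi> t0 \<in> cball x (2*r)")
      case True
      then obtain t0 where t0: "t0 \<in> R r" "\<phi> t0 \<in> cball x (2*r)" by blast
      obtain x' where x': "x' \<in> msupp M" "dist x x' \<le> (1-\<alpha>)*r" "3*\<alpha>*r < dist x' (\<phi> t0)"
        using avoid[OF sM dec Cpos gpos apos ale _ r, of x "\<phi> t0"] x unfolding K_def by blast
      have "good x r x'"
        unfolding good_def
      proof (intro conjI ballI impI)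
        show "x' \<in> K" using x' unfolding K_def by simp
        show "dist x x' \<le> (1-\<alpha>)*r" by (rule x'(2))
        fix t assume t: "t \<in> R r" "\<phi> t \<in> cball x (2*r)"
        obtain p q where pq: "q > 0" "8*L*r*(real q)^2 \<le> 1" "t = real_of_int p / real q"
          using t(1) unfolding R_def by blast
        obtain p' q' where pq': "q' > 0" "8*L*r*(real q')^2 \<le> 1" "t0 = real_of_int p' / real q'"
          using t0(1) unfolding R_def by blast
        have "\<bar>\<phi> t - \<phi> t0\<bar> \<le> 4 * r"
          using t(2) t0(2) by (auto simp: dist_real_def)
        then have "t = t0" using uniq[OF L lo r(1) pq(3,1,2) pq'(3,1,2)] by blast
        then show "3*\<alpha>*r < dist x' (\<phi> t)" using x'(3) by simp
      qed
      then show ?thesis by blast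
    next
      case False
      have "good x r x" unfolding good_def using False x a4 r by auto
      then show ?thesis by blast
    qed
    have sndA: "snd (A w) = \<alpha> * snd w" for w unfolding A_def by simp
    have Agood: "good (fst w) (snd w) (fst (A w))"
      if "fst w \<in> K" "0 < snd w" "snd w \<le> \<rho>0" for w
      using that goodex[of "fst w" "snd w"] unfolding A_def by (auto intro: someI_ex)
    have Alegal: "legal_move K \<alpha> w (A w)" if w: "fst w \<in> K" "0 < snd w" for w
    proof (cases "snd w \<le> \<rho>0")
      case True
      then have "good (fst w) (snd w) (fst (A w))" using Agood w by blast
      then show ?thesis unfolding legal_move_def s_le_def good_def using sndA[of w]
        by (auto simp: algebra_simps)
    next
      case False
      then show ?thesis unfolding legal_move_def s_le_def A_def using w a4
        by (auto simp: algebra_simps)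
    qed
    show ?thesis
      unfolding alpha_winning_on_def
    proof (intro allI impI)
      fix \<beta> :: real assume \<beta>: "0 < \<beta> \<and> \<beta> < 1"
      show "\<exists>\<sigma> :: (real \<times> real) list \<Rightarrow> real \<times> real.
        \<forall>b :: nat \<Rightarrow> real \<times> real.
          let a = (\<lambda>k. \<sigma> (map b [0..<Suc k])) in
          let bob_ok = (\<lambda>k. fst (b 0) \<in> msupp M \<and> snd (b 0) > 0 \<and>
                               (\<forall>j<k. legal_move (msupp M) \<beta> (a j) (b (Suc j)))) in
          (\<forall>k. bob_ok k \<longrightarrow> legal_move (msupp M) \<alpha> (b k) (a k)) \<and>
          ((\<forall>k. bob_ok k) \<longrightarrow>
             (\<forall>x\<in>msupp M. (\<forall>k. dist (fst (b k)) x \<le> snd (b k)) \<longrightarrow> x \<in> \<phi> ` BA))"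
      proof (intro exI[of _ "\<lambda>l. A (last l)"] allI)
        fix b :: "nat \<Rightarrow> real \<times> real"
        have lastmap: "last (map b [0..<Suc k]) = b k" for k by simp
        define ok where "ok k \<longleftrightarrow> fst (b 0) \<in> K \<and> snd (b 0) > 0 \<and>
                               (\<forall>j<k. legal_move K \<beta> (A (b j)) (b (Suc j)))" for k
        have key: "\<forall>j\<le>k. fst (b j) \<in> K \<and> snd (b j) = (\<alpha>*\<beta>)^j * snd (b 0)" if "ok k" for k
          using that
        proof (induction k)
          case 0
          then show ?case unfolding ok_def by simp
        next
          case (Suc k)
          have "ok k" using Suc.prems unfolding ok_def by auto
          then have IH: "\<forall>j\<le>k. fst (b j) \<in> K \<and> snd (b j) = (\<alpha>*\<beta>)^j * snd (b 0)" by (rule Suc.IH)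
          have lm: "legal_move K \<beta> (A (b k)) (b (Suc k))" using Suc.prems unfolding ok_def by auto
          then have "fst (b (Suc k)) \<in> K" "snd (b (Suc k)) = \<beta> * (\<alpha> * snd (b k))"
            unfolding legal_move_def using sndA by auto
          moreover have "snd (b k) = (\<alpha>*\<beta>)^k * snd (b 0)" using IH by blast
          ultimately have new: "fst (b (Suc k)) \<in> K \<and> snd (b (Suc k)) = (\<alpha>*\<beta>)^(Suc k) * snd (b 0)"
            by (simp add: ac_simps)
          show ?case
          proof (intro allI impI)
            fix j assume "j \<le> Suc k"
            then consider "j \<le> k" | "j = Suc k" by linarith
            then show "fst (b j) \<in> K \<and> snd (b j) = (\<alpha>*\<beta>)^j * snd (b 0)"
            proof cases
              case 1 then show ?thesis using IH by blast
            next
              case 2 then show ?thesis using new by blast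
            qed
          qed
        qed
        have part1: "legal_move K \<alpha> (b k) (A (b k))" if "ok k" for k
        proof -
          have "fst (b k) \<in> K" "snd (b k) = (\<alpha>*\<beta>)^k * snd (b 0)" using key[OF that] by blast+
          moreover have "snd (b 0) > 0" using that unfolding ok_def by blast
          ultimately have "fst (b k) \<in> K" "0 < snd (b k)" using apos \<beta> by auto
          then show ?thesis by (rule Alegal)
        qed
        have part2: "x \<in> \<phi> ` BA" if allok: "\<forall>k. ok k" and xK: "x \<in> K"
          and xin: "\<forall>k. dist (fst (b k)) x \<le> snd (b k)" for x
        proof -
          define r0 where "r0 = snd (b 0)"
          have r0: "r0 > 0" using allok unfolding ok_def r0_def by blast
          have "\<alpha>*\<beta> < \<alpha>" using apos \<beta> by simp
          have ab1: "0 < \<alpha>*\<beta>" using apos \<beta> by simp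
          have ab2: "\<alpha>*\<beta> < 1" using \<open>\<alpha>*\<beta> < \<alpha>\<close> a4 by linarith
          note ab = ab1 ab2
          have cK: "fst (b k) \<in> K" for k using key[OF allok[rule_format, of k]] by blast
          have rk: "snd (b k) = (\<alpha>*\<beta>)^k * r0" for k using key[OF allok[rule_format, of k]] unfolding r0_def by blast
          have rpos: "snd (b k) > 0" for k unfolding rk using r0 ab by simp
          have rSuc: "snd (b (Suc k)) = \<alpha>*\<beta> * snd (b k)" for k unfolding rk by simp
          have lm: "legal_move K \<beta> (A (b k)) (b (Suc k))" for k
            using allok[rule_format, of "Suc k"] unfolding ok_def by blast
          have alice: "dist (fst (A (b k))) x \<le> \<alpha> * snd (b k)" for k
          proof -
            have "snd (b (Suc k)) + dist (fst (A (b k))) (fst (b (Suc k))) \<le> \<alpha> * snd (b k)"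
              using lm[of k] sndA[of "b k"] unfolding legal_move_def s_le_def by simp
            moreover have "dist (fst (A (b k))) x \<le> dist (fst (A (b k))) (fst (b (Suc k))) + dist (fst (b (Suc k))) x"
              by (rule dist_triangle)
            moreover have "dist (fst (b (Suc k))) x \<le> snd (b (Suc k))" using xin by blast
            ultimately show ?thesis by linarith
          qed
          obtain t where t: "\<phi> t = x" using surj_bilip[OF L bl] by blast
          define d where "d = min (\<alpha>^2*\<beta>/(4*L)) (2*\<alpha>*min r0 (\<alpha>*\<beta>*\<rho>0))"
          have dpos: "d > 0" unfolding d_def using apos \<beta> L r0 \<rho>0 by auto
          have dm: "d \<le> 2*\<alpha>*min r0 (\<alpha>*\<beta>*\<rho>0)" unfolding d_def by simp
          have dm1: "d \<le> 2*\<alpha>*r0"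
          proof -
            have "2*\<alpha>*min r0 (\<alpha>*\<beta>*\<rho>0) \<le> 2*\<alpha>*r0" using apos by (intro mult_left_mono) auto
            then show ?thesis using dm by linarith
          qed
          have dm2: "d \<le> 2*\<alpha>*(\<alpha>*\<beta>*\<rho>0)"
          proof -
            have "2*\<alpha>*min r0 (\<alpha>*\<beta>*\<rho>0) \<le> 2*\<alpha>*(\<alpha>*\<beta>*\<rho>0)" using apos by (intro mult_left_mono) auto
            then show ?thesis using dm by linarith
          qed
          have main: "d / (real q)^2 < L * \<bar>t - real_of_int p / real q\<bar>" if q: "q > 0" for p :: int and q :: nat
          proof -
            define s where "s = real_of_int p / real q"
            have q1: "(real q)^2 \<ge> 1" using q by (simp add: one_le_power)
            have q2: "(real q)^2 > 0" using q by simp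
            define P where "P k \<longleftrightarrow> snd (b k) \<le> \<rho>0 \<and> 8*L* snd (b k)*(real q)^2 \<le> 1" for k
            have "\<exists>k. P k"
            proof -
              have "8*L*(real q)^2 > 0" using L q by (auto intro!: mult_pos_pos)
              then have "1/(8*L*(real q)^2) > 0" by simp
              then have "min \<rho>0 (1/(8*L*(real q)^2)) > 0" using \<rho>0 by simp
              then have y: "min \<rho>0 (1/(8*L*(real q)^2)) / r0 > 0" using r0 by simp
              obtain n where n: "(\<alpha>*\<beta>)^n < min \<rho>0 (1/(8*L*(real q)^2)) / r0"
                using real_arch_pow_inv[OF y ab(2)] by blast
              then have "(\<alpha>*\<beta>)^n * r0 < min \<rho>0 (1/(8*L*(real q)^2))"
                using r0 by (simp add: field_simps)
              then have "snd (b n) \<le> \<rho>0" "snd (b n) < 1/(8*L*(real q)^2)" unfolding rk by auto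
              moreover have "8*L*(real q)^2 > 0" using L q by (auto intro!: mult_pos_pos)
              ultimately have "P n" unfolding P_def by (simp add: field_simps)
              then show ?thesis by blast
            qed
            define k where "k = (LEAST k. P k)"
            have Pk: "P k" unfolding k_def by (rule LeastI_ex) fact
            have notP: "\<not> P j" if "j < k" for j using not_less_Least[of j P] that unfolding k_def by blast
            have dk: "d / (real q)^2 \<le> 2*\<alpha>* snd (b k)"
            proof (cases k)
              case 0
              have "d / (real q)^2 \<le> d" using q1 dpos by (simp add: divide_le_eq)
              also have "d \<le> 2*\<alpha>*r0" by (rule dm1)
              finally show ?thesis using 0 unfolding rk by simp
            next
              case (Suc j)
              have nP: "\<not> P j" using notP Suc by simp
              show ?thesis
              proof (cases "snd (b j) \<le> \<rho>0")
                case True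
                then have "8*L* snd (b j)*(real q)^2 > 1" using nP unfolding P_def by auto
                then have "1/(real q)^2 < 8*L* snd (b j)" using q2 by (simp add: divide_less_eq algebra_simps)
                have "d \<le> \<alpha>^2*\<beta>/(4*L)" unfolding d_def by simp
                then have "d / (real q)^2 \<le> (\<alpha>^2*\<beta>/(4*L)) / (real q)^2"
                  using q2 by (intro divide_right_mono) auto
                also have "\<dots> = (\<alpha>^2*\<beta>/(4*L)) * (1/(real q)^2)" by simp
                also have "\<dots> \<le> (\<alpha>^2*\<beta>/(4*L)) * (8*L* snd (b j))"
                  using \<open>1/(real q)^2 < 8*L* snd (b j)\<close> apos \<beta> L by (intro mult_left_mono) auto
                also have "\<dots> = 2*\<alpha>*(\<alpha>*\<beta>* snd (b j))" using L by (simp add: field_simps power2_eq_square)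
                also have "\<dots> = 2*\<alpha>* snd (b k)" using rSuc[of j] Suc by simp
                finally show ?thesis .
              next
                case False
                have "d / (real q)^2 \<le> d" using q1 dpos by (simp add: divide_le_eq)
                also have "d \<le> 2*\<alpha>*(\<alpha>*\<beta>*\<rho>0)" by (rule dm2)
                also have "\<dots> \<le> 2*\<alpha>*(\<alpha>*\<beta>* snd (b j))" using False apos \<beta>
                  by (intro mult_left_mono) auto
                also have "\<dots> = 2*\<alpha>* snd (b k)" using rSuc[of j] Suc by simp
                finally show ?thesis .
              qed
            qed
            have far: "2*\<alpha>* snd (b k) < dist x (\<phi> s)"
            proof (cases "\<phi> s \<in> cball (fst (b k)) (2* snd (b k))")
              case True
              have sR: "s \<in> R (snd (b k))" unfolding R_def s_def using q Pk unfolding P_def by blast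
              have "good (fst (b k)) (snd (b k)) (fst (A (b k)))"
                using Agood[of "b k"] cK rpos Pk unfolding P_def by blast
              then have "3*\<alpha>* snd (b k) < dist (fst (A (b k))) (\<phi> s)"
                unfolding good_def using sR True by blast
              moreover have "dist (fst (A (b k))) (\<phi> s) \<le> dist (fst (A (b k))) x + dist x (\<phi> s)"
                by (rule dist_triangle)
              ultimately show ?thesis using alice[of k] by linarith
            next
              case False
              then have "2* snd (b k) < dist (fst (b k)) (\<phi> s)" by simp
              moreover have "dist (fst (b k)) (\<phi> s) \<le> dist (fst (b k)) x + dist x (\<phi> s)"
                by (rule dist_triangle)
              moreover have "dist (fst (b k)) x \<le> snd (b k)" using xin by blast
              moreover have "2*\<alpha>* snd (b k) \<le> snd (b k)" using a4 rpos[of k] by simp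
              ultimately show ?thesis by linarith
            qed
            have "dist x (\<phi> s) \<le> L * \<bar>t - s\<bar>" using up[of t s] t by (simp add: dist_real_def)
            then have "d / (real q)^2 < L * \<bar>t - s\<bar>" using dk far by linarith
            then show ?thesis unfolding s_def .
          qed
          have "t \<in> BA"
            unfolding BA_def
          proof (intro CollectI exI[of _ "d / L"] conjI allI impI)
            show "0 < d / L" using dpos L by simp
            fix p :: int and q :: nat assume q: "0 < q"
            have "d / (real q)^2 < L * \<bar>t - real_of_int p / real q\<bar>" using main[OF q] .
            then have "(d / (real q)^2) / L < \<bar>t - real_of_int p / real q\<bar>"
              using L pos_divide_less_eq[of L "d / (real q)^2" "\<bar>t - real_of_int p / real q\<bar>"]
              by (simp add: mult.commute)
            moreover have "d / L / (real q)^2 = (d / (real q)^2) / L" by simp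
            ultimately show "d / L / (real q)^2 < \<bar>t - real_of_int p / real q\<bar>" by (simp add: mult.commute)
          qed
          then show ?thesis using t by blast
        qed
        show "let a = (\<lambda>k. (\<lambda>l. A (last l)) (map b [0..<Suc k])) in
          let bob_ok = (\<lambda>k. fst (b 0) \<in> msupp M \<and> snd (b 0) > 0 \<and>
                               (\<forall>j<k. legal_move (msupp M) \<beta> (a j) (b (Suc j)))) in
          (\<forall>k. bob_ok k \<longrightarrow> legal_move (msupp M) \<alpha> (b k) (a k)) \<and>
          ((\<forall>k. bob_ok k) \<longrightarrow>
             (\<forall>x\<in>msupp M. (\<forall>k. dist (fst (b k)) x \<le> snd (b k)) \<longrightarrow> x \<in> \<phi> ` BA))"
          unfolding Let_def lastmap
          using part1 part2 unfolding ok_def K_def by blast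
      qed
    qed
  qed
qed

end
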